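(* Let $\mathbb{S}$ be a commutative semigroup with unit $0$, let $T=\{T_s\}_{s\in\mathbb{S}}$ be a CP-semigroup on $\mathcal{B}(H)$, and let $(p,K,\mathcal{B},\theta)$ be a minimal dilation of $T$. Then $\mathcal{B}=\mathcal{B}(K)$.
   Context: A CP-semigroup over $\mathbb{S}$ on a von Neumann algebra $\mathcal{A}\subseteq\mathcal{B}(H)$ is a family $T=\{T_s\}_{s\in\mathbb{S}}$ of normal contractive completely positive maps on $\mathcal{A}$ with $T_0=\mathrm{id}_{\mathcal{A}}$ and $T_s\circ T_t=T_{s+t}$. An E-semigroup is a CP-semigroup consisting of $*$-endomorphisms. A dilation of $T$ is a quadruple $(p,K,\mathcal{B},\theta)$ where $K\supseteq H$ is a Hilbert space, $\mathcal{B}\subseteq\mathcal{B}(K)$ is a von Neumann algebra, $p\in\mathcal{B}$ is the orthogonal projection $K\to H$, $\mathcal{A}=p\mathcal{B}p$, and $\theta=\{\theta_s\}_{s\in\mathbb{S}}$ is an E-semigroup on $\mathcal{B}$ with $T_s(a)=p\theta_s(a)p$ for all $a\in\mathcal{A}$, $s\in\mathbb{S}$. The dilation is minimal if the von Neumann algebra generated by $\bigcup_{s}\theta_s(\mathcal{A})$ is $\mathcal{B}$ and the central carrier of $p$ in $\mathcal{B}$ (the smallest projection $q\in\mathcal{B}\cap\mathcal{B}'$ with $qp=p$) equals $1_{\mathcal{B}}$. *)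

theory Defs
  imports Complex_Main
begin

class chilbert = ab_group_add +
  fixes scaleC :: "complex \<Rightarrow> 'a \<Rightarrow> 'a" (infixr "*\<^sub>C" 75)
    and cinner :: "'a \<Rightarrow> 'a \<Rightarrow> complex"
  assumes scaleC_add_right: "c *\<^sub>C (x + y) = c *\<^sub>C x + c *\<^sub>C y"
    and scaleC_add_left: "(c + d) *\<^sub>C x = c *\<^sub>C x + d *\<^sub>C x"
    and scaleC_scaleC: "c *\<^sub>C (d *\<^sub>C x) = (c * d) *\<^sub>C x"
    and scaleC_one: "1 *\<^sub>C x = x"
    and cinner_add_right: "cinner x (y + z) = cinner x y + cinner x z"
    and cinner_scaleC_right: "cinner x (c *\<^sub>C y) = c * cinner x y"
    and cinner_commute: "cinner y x = cnj (cinner x y)"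
    and cinner_pos: "x \<noteq> 0 \<Longrightarrow> 0 < Re (cinner x x)"
    and complete:
      "(\<forall>e>0. \<exists>N::nat. \<forall>m\<ge>N. \<forall>n\<ge>N. sqrt (Re (cinner ((X::nat\<Rightarrow>'a) m - X n) (X m - X n))) < e)
       \<Longrightarrow> (\<exists>L. \<forall>e>0. \<exists>N::nat. \<forall>n\<ge>N. sqrt (Re (cinner (X n - L) (X n - L))) < e)"

definition cnorm :: "'k::chilbert \<Rightarrow> real" where
  "cnorm x = sqrt (Re (cinner x x))"

definition closed_subspace :: "'k::chilbert set \<Rightarrow> bool" where
  "closed_subspace H \<longleftrightarrow> 0 \<in> H \<and> (\<forall>x\<in>H. \<forall>y\<in>H. x + y \<in> H)
     \<and> (\<forall>c. \<forall>x\<in>H. c *\<^sub>C x \<in> H)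
     \<and> (\<forall>X L. (\<forall>n. X n \<in> H) \<and> (\<lambda>n. cnorm (X n - L)) \<longlonglongrightarrow> 0 \<longrightarrow> L \<in> H)"

definition clinear :: "('k::chilbert \<Rightarrow> 'k) \<Rightarrow> bool" where
  "clinear f \<longleftrightarrow> (\<forall>x y. f (x + y) = f x + f y) \<and> (\<forall>c x. f (c *\<^sub>C x) = c *\<^sub>C f x)"

definition BK :: "('k::chilbert \<Rightarrow> 'k) set" where
  "BK = {f. clinear f \<and> (\<exists>M. \<forall>x. cnorm (f x) \<le> M * cnorm x)}"

definition adj :: "('k::chilbert \<Rightarrow> 'k) \<Rightarrow> ('k \<Rightarrow> 'k)" where
  "adj f = (THE g. \<forall>x y. cinner (f x) y = cinner x (g y))"

definition opnorm :: "('k::chilbert \<Rightarrow> 'k) \<Rightarrow> real" where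
  "opnorm f = Sup {cnorm (f x) | x. cnorm x \<le> 1}"

definition selfadj :: "('k::chilbert \<Rightarrow> 'k) \<Rightarrow> bool" where
  "selfadj a \<longleftrightarrow> (\<forall>x y. cinner (a x) y = cinner x (a y))"

definition pos_op :: "('k::chilbert \<Rightarrow> 'k) \<Rightarrow> bool" where
  "pos_op a \<longleftrightarrow> (\<forall>x. Im (cinner x (a x)) = 0 \<and> 0 \<le> Re (cinner x (a x)))"

definition op_le :: "('k::chilbert \<Rightarrow> 'k) \<Rightarrow> ('k \<Rightarrow> 'k) \<Rightarrow> bool" where
  "op_le a b \<longleftrightarrow> pos_op (\<lambda>x. b x - a x)"

definition is_projection :: "('k::chilbert \<Rightarrow> 'k) \<Rightarrow> bool" where
  "is_projection p \<longleftrightarrow> p \<in> BK \<and> p \<circ> p = p \<and> adj p = p"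

text \<open>Operators on a closed subspace H, identified with operators on K that
  map into H and vanish on the orthogonal complement of H (i.e. B(H) = pB(K)p).\<close>
definition ops_on :: "'k::chilbert set \<Rightarrow> ('k \<Rightarrow> 'k) set" where
  "ops_on H = {a \<in> BK. (\<forall>x. a x \<in> H) \<and> (\<forall>x. (\<forall>h\<in>H. cinner h x = 0) \<longrightarrow> a x = 0)}"

definition commutant :: "('k::chilbert \<Rightarrow> 'k) set \<Rightarrow> ('k \<Rightarrow> 'k) set" where
  "commutant S = {b \<in> BK. \<forall>a\<in>S. a \<circ> b = b \<circ> a}"

definition vN_algebra :: "('k::chilbert \<Rightarrow> 'k) set \<Rightarrow> bool" where
  "vN_algebra M \<longleftrightarrow> M \<subseteq> BK \<and> (\<forall>a\<in>M. adj a \<in> M) \<and> commutant (commutant M) = M"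

definition vN_generated :: "('k::chilbert \<Rightarrow> 'k) set \<Rightarrow> ('k \<Rightarrow> 'k) set" where
  "vN_generated S = \<Inter> {M. vN_algebra M \<and> S \<subseteq> M}"

definition is_central_carrier ::
  "('k::chilbert \<Rightarrow> 'k) set \<Rightarrow> ('k \<Rightarrow> 'k) \<Rightarrow> ('k \<Rightarrow> 'k) \<Rightarrow> bool" where
  "is_central_carrier B p q \<longleftrightarrow>
     q \<in> B \<inter> commutant B \<and> is_projection q \<and> q \<circ> p = p \<and>
     (\<forall>q'. q' \<in> B \<inter> commutant B \<and> is_projection q' \<and> q' \<circ> p = p \<longrightarrow> op_le q q')"

definition central_carrier :: "('k::chilbert \<Rightarrow> 'k) set \<Rightarrow> ('k \<Rightarrow> 'k) \<Rightarrow> ('k \<Rightarrow> 'k)" where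
  "central_carrier B p = (THE q. is_central_carrier B p q)"

definition linear_on :: "('k::chilbert \<Rightarrow> 'k) set \<Rightarrow> (('k \<Rightarrow> 'k) \<Rightarrow> ('k \<Rightarrow> 'k)) \<Rightarrow> bool" where
  "linear_on M \<phi> \<longleftrightarrow> (\<forall>a\<in>M. \<forall>b\<in>M. \<phi> (\<lambda>x. a x + b x) = (\<lambda>x. \<phi> a x + \<phi> b x))
     \<and> (\<forall>c. \<forall>a\<in>M. \<phi> (\<lambda>x. c *\<^sub>C a x) = (\<lambda>x. c *\<^sub>C \<phi> a x))"

definition pos_mat :: "nat \<Rightarrow> (nat \<Rightarrow> nat \<Rightarrow> ('k::chilbert \<Rightarrow> 'k)) \<Rightarrow> bool" where
  "pos_mat n a \<longleftrightarrow> (\<forall>\<xi> :: nat \<Rightarrow> 'k.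
     Im (\<Sum>i<n. \<Sum>j<n. cinner (\<xi> i) (a i j (\<xi> j))) = 0 \<and>
     0 \<le> Re (\<Sum>i<n. \<Sum>j<n. cinner (\<xi> i) (a i j (\<xi> j))))"

definition cp_map :: "('k::chilbert \<Rightarrow> 'k) set \<Rightarrow> (('k \<Rightarrow> 'k) \<Rightarrow> ('k \<Rightarrow> 'k)) \<Rightarrow> bool" where
  "cp_map M \<phi> \<longleftrightarrow> linear_on M \<phi> \<and>
     (\<forall>n a. (\<forall>i<n. \<forall>j<n. a i j \<in> M) \<and> pos_mat n a \<longrightarrow> pos_mat n (\<lambda>i j. \<phi> (a i j)))"

definition contractive_on :: "('k::chilbert \<Rightarrow> 'k) set \<Rightarrow> (('k \<Rightarrow> 'k) \<Rightarrow> ('k \<Rightarrow> 'k)) \<Rightarrow> bool" where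
  "contractive_on M \<phi> \<longleftrightarrow> (\<forall>a\<in>M. opnorm (\<phi> a) \<le> opnorm a)"

definition op_lub :: "('k::chilbert \<Rightarrow> 'k) set \<Rightarrow> ('k \<Rightarrow> 'k) \<Rightarrow> bool" where
  "op_lub D a \<longleftrightarrow> a \<in> BK \<and> selfadj a \<and> (\<forall>d\<in>D. op_le d a) \<and>
     (\<forall>b\<in>BK. selfadj b \<and> (\<forall>d\<in>D. op_le d b) \<longrightarrow> op_le a b)"

text \<open>Normality: preservation of suprema of bounded increasing nets of positive
  operators (nets represented by their upward-directed ranges).\<close>
definition normal_on :: "('k::chilbert \<Rightarrow> 'k) set \<Rightarrow> (('k \<Rightarrow> 'k) \<Rightarrow> ('k \<Rightarrow> 'k)) \<Rightarrow> bool" where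
  "normal_on M \<phi> \<longleftrightarrow> (\<forall>D a. D \<subseteq> M \<and> D \<noteq> {} \<and> (\<forall>d\<in>D. pos_op d) \<and>
       (\<forall>x\<in>D. \<forall>y\<in>D. \<exists>z\<in>D. op_le x z \<and> op_le y z) \<and> a \<in> M \<and> op_lub D a
     \<longrightarrow> op_lub (\<phi> ` D) (\<phi> a))"

definition cp_semigroup ::
  "('k::chilbert \<Rightarrow> 'k) set \<Rightarrow> ('s::comm_monoid_add \<Rightarrow> ('k \<Rightarrow> 'k) \<Rightarrow> ('k \<Rightarrow> 'k)) \<Rightarrow> bool" where
  "cp_semigroup M T \<longleftrightarrow>
     (\<forall>s. \<forall>a\<in>M. T s a \<in> M) \<and>
     (\<forall>s. normal_on M (T s) \<and> contractive_on M (T s) \<and> cp_map M (T s)) \<and>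
     (\<forall>a\<in>M. T 0 a = a) \<and>
     (\<forall>s t. \<forall>a\<in>M. T s (T t a) = T (s + t) a)"

definition e_semigroup ::
  "('k::chilbert \<Rightarrow> 'k) set \<Rightarrow> ('s::comm_monoid_add \<Rightarrow> ('k \<Rightarrow> 'k) \<Rightarrow> ('k \<Rightarrow> 'k)) \<Rightarrow> bool" where
  "e_semigroup M \<theta> \<longleftrightarrow> cp_semigroup M \<theta> \<and>
     (\<forall>s. \<forall>a\<in>M. \<forall>b\<in>M. \<theta> s (a \<circ> b) = \<theta> s a \<circ> \<theta> s b) \<and>
     (\<forall>s. \<forall>a\<in>M. \<theta> s (adj a) = adj (\<theta> s a))"

text \<open>\<open>dilation H A T p B \<theta>\<close>: the algebra A of operators on the closed subspace
  H of K (A represented inside B(K), supported on H) has the dilation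
  (p, K, B, \<theta>), K being the type 'k.\<close>
definition dilation ::
  "'k::chilbert set \<Rightarrow> ('k \<Rightarrow> 'k) set \<Rightarrow> ('s::comm_monoid_add \<Rightarrow> ('k \<Rightarrow> 'k) \<Rightarrow> ('k \<Rightarrow> 'k))
   \<Rightarrow> ('k \<Rightarrow> 'k) \<Rightarrow> ('k \<Rightarrow> 'k) set \<Rightarrow> ('s \<Rightarrow> ('k \<Rightarrow> 'k) \<Rightarrow> ('k \<Rightarrow> 'k)) \<Rightarrow> bool" where
  "dilation H A T p B \<theta> \<longleftrightarrow>
     vN_algebra B \<and> p \<in> B \<and> is_projection p \<and> range p = H \<and>
     A = {p \<circ> b \<circ> p | b. b \<in> B} \<and>
     e_semigroup B \<theta> \<and>
     (\<forall>s. \<forall>a\<in>A. T s a = p \<circ> \<theta> s a \<circ> p)"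

definition minimal_dilation ::
  "'k::chilbert set \<Rightarrow> ('k \<Rightarrow> 'k) set \<Rightarrow> ('s::comm_monoid_add \<Rightarrow> ('k \<Rightarrow> 'k) \<Rightarrow> ('k \<Rightarrow> 'k))
   \<Rightarrow> ('k \<Rightarrow> 'k) \<Rightarrow> ('k \<Rightarrow> 'k) set \<Rightarrow> ('s \<Rightarrow> ('k \<Rightarrow> 'k) \<Rightarrow> ('k \<Rightarrow> 'k)) \<Rightarrow> bool" where
  "minimal_dilation H A T p B \<theta> \<longleftrightarrow>
     dilation H A T p B \<theta> \<and>
     vN_generated (\<Union>s. \<theta> s ` A) = B \<and>
     central_carrier B p = id"

end

theory Submission
  imports Defs
begin


lemma scaleC_zero_left[simp]: "(0::complex) *\<^sub>C (x::'a::chilbert) = 0"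
proof -
  have "0 *\<^sub>C x = 0 *\<^sub>C x + 0 *\<^sub>C x" using scaleC_add_left[of 0 0 x] by simp
  thus ?thesis by simp
qed

lemma scaleC_zero_right[simp]: "c *\<^sub>C (0::'a::chilbert) = 0"
proof -
  have "c *\<^sub>C (0::'a) = c *\<^sub>C 0 + c *\<^sub>C 0" using scaleC_add_right[of c 0 0] by simp
  thus ?thesis by simp
qed

lemma scaleC_minus_right: "c *\<^sub>C (- (x::'a::chilbert)) = - (c *\<^sub>C x)"
proof -
  have "c *\<^sub>C (- x) + c *\<^sub>C x = 0" using scaleC_add_right[of c "-x" x] by simp
  thus ?thesis by (simp add: eq_neg_iff_add_eq_0)
qed

lemma scaleC_diff_right: "c *\<^sub>C ((x::'a::chilbert) - y) = c *\<^sub>C x - c *\<^sub>C y"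
  using scaleC_add_right[of c x "-y"] by (simp add: scaleC_minus_right)

lemma scaleC_minus_left: "(- c) *\<^sub>C (x::'a::chilbert) = - (c *\<^sub>C x)"
proof -
  have "(- c) *\<^sub>C x + c *\<^sub>C x = 0" using scaleC_add_left[of "-c" c x] by simp
  thus ?thesis by (simp add: eq_neg_iff_add_eq_0)
qed

lemma scaleC_diff_left: "(c - d) *\<^sub>C (x::'a::chilbert) = c *\<^sub>C x - d *\<^sub>C x"
  using scaleC_add_left[of c "-d" x] by (simp add: scaleC_minus_left)

lemma cinner_zero_right[simp]: "cinner x (0::'a::chilbert) = 0"
  using cinner_add_right[of x 0 0] by simp

lemma cinner_zero_left[simp]: "cinner (0::'a::chilbert) x = 0"
  using cinner_commute[of x 0] by simp

lemma cinner_add_left: "cinner ((x::'a::chilbert) + y) z = cinner x z + cinner y z"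
  by (metis cinner_add_right cinner_commute complex_cnj_add)

lemma cinner_scaleC_left: "cinner (c *\<^sub>C (x::'a::chilbert)) y = cnj c * cinner x y"
  by (metis cinner_commute cinner_scaleC_right complex_cnj_mult)

lemma cinner_minus_right: "cinner x (- (y::'a::chilbert)) = - cinner x y"
  using cinner_add_right[of x "-y" y] by (simp add: eq_neg_iff_add_eq_0)

lemma cinner_minus_left: "cinner (- (x::'a::chilbert)) y = - cinner x y"
  using cinner_add_left[of "-x" x y] by (simp add: eq_neg_iff_add_eq_0)

lemma cinner_diff_right: "cinner x ((y::'a::chilbert) - z) = cinner x y - cinner x z"
  using cinner_add_right[of x y "-z"] by (simp add: cinner_minus_right)

lemma cinner_diff_left: "cinner ((x::'a::chilbert) - y) z = cinner x z - cinner y z"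
  using cinner_add_left[of x "-y" z] by (simp add: cinner_minus_left)

lemmas cinner_simps = cinner_add_left cinner_add_right cinner_diff_left cinner_diff_right
  cinner_scaleC_left cinner_scaleC_right cinner_minus_left cinner_minus_right

lemma cinner_self_Im[simp]: "Im (cinner (x::'a::chilbert) x) = 0"
  using cinner_commute[of x x] by (metis complex_cnj_cancel_iff complex_eq_cancel_iff2 Reals_cnj_iff complex_is_Real_iff)

lemma cinner_self_real: "cinner (x::'a::chilbert) x = complex_of_real (Re (cinner x x))"
  by (simp add: complex_eq_iff)

lemma cinner_self_ge0[simp]: "0 \<le> Re (cinner (x::'a::chilbert) x)"
  by (cases "x = 0") (auto dest: cinner_pos intro: less_imp_le)

lemma cinner_self_eq0[simp]: "cinner (x::'a::chilbert) x = 0 \<longleftrightarrow> x = 0"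
proof
  assume "cinner x x = 0" thus "x = 0" using cinner_pos[of x] by (cases "x = 0") auto
qed simp

lemma Re_cinner_self_eq0[simp]: "Re (cinner (x::'a::chilbert) x) = 0 \<longleftrightarrow> x = 0"
proof
  assume "Re (cinner x x) = 0" thus "x = 0" using cinner_pos[of x] by (cases "x = 0") auto
qed simp

lemma cinner_ext: "(\<And>z. cinner z (x::'a::chilbert) = cinner z y) \<Longrightarrow> x = y"
proof -
  assume h: "\<And>z. cinner z x = cinner z y"
  have "cinner (x - y) (x - y) = 0" by (simp add: cinner_diff_right h)
  thus ?thesis by simp
qed

lemma cnorm_ge0[simp]: "0 \<le> cnorm x" by (simp add: cnorm_def)

lemma cnorm_sq: "(cnorm x)^2 = Re (cinner x x)" by (simp add: cnorm_def)

lemma cnorm_eq0[simp]: "cnorm x = 0 \<longleftrightarrow> x = 0" by (simp add: cnorm_def)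

lemma cnorm_zero[simp]: "cnorm 0 = 0" by simp

lemma cmod_cinner_self: "cmod (cinner x x) = (cnorm x)^2"
  by (subst cinner_self_real) (simp add: cnorm_sq)

lemma cnorm_scaleC: "cnorm (c *\<^sub>C x) = cmod c * cnorm x"
proof -
  have "Re (cinner (c *\<^sub>C x) (c *\<^sub>C x)) = (cmod c)^2 * Re (cinner x x)"
  proof -
    have e: "cnj c * c = complex_of_real ((cmod c)^2)" by (metis complex_norm_square mult.commute)
    have cm: "Re c * Re c + Im c * Im c = cmod c * cmod c"
      using cmod_power2[of c] by (simp add: power2_eq_square)
    show ?thesis using cm
      apply (subst (1 2) cinner_self_real)
      by (simp add: cinner_scaleC_left cinner_scaleC_right mult.assoc[symmetric] e cmod_power2 power2_eq_square del: of_real_power)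
  qed
  hence "cnorm (c *\<^sub>C x) = sqrt ((cmod c)^2 * (cnorm x)^2)" by (simp add: cnorm_def)
  thus ?thesis by (simp add: real_sqrt_mult)
qed

lemma cnorm_minus: "cnorm (- x) = cnorm x"
  by (simp add: cnorm_def cinner_minus_left cinner_minus_right)

lemma cnorm_commute: "cnorm (x - y) = cnorm (y - x)"
  by (metis cnorm_minus minus_diff_eq)

lemma expand_sq: "cinner ((x::'a::chilbert) - t *\<^sub>C y) (x - t *\<^sub>C y)
   = cinner x x - t * cinner x y - cnj t * cinner y x + cnj t * t * cinner y y"
  by (simp add: cinner_simps algebra_simps)

lemma cauchy_schwarz: "(cmod (cinner x y))^2 \<le> Re (cinner x x) * Re (cinner (y::'a::chilbert) y)"
proof (cases "x = 0")
  case True thus ?thesis by simp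
next
  case False
  define r where "r = Re (cinner x x)"
  have r: "r > 0" using cinner_pos[OF False] by (simp add: r_def)
  have rx: "cinner x x = complex_of_real r" by (simp add: r_def cinner_self_real[of x, symmetric])
  define t where "t = cinner x y / complex_of_real r"
  have "0 \<le> Re (cinner (y - t *\<^sub>C x) (y - t *\<^sub>C x))" by simp
  also have "cinner (y - t *\<^sub>C x) (y - t *\<^sub>C x) = cinner y y - complex_of_real ((cmod (cinner x y))^2 / r)"
  proof -
    have c: "cinner y x = cnj (cinner x y)" by (rule cinner_commute)
    have cm: "cmod (cinner x y) * cmod (cinner x y) = Re (cinner x y) * Re (cinner x y) + Im (cinner x y) * Im (cinner x y)"
      using cmod_power2[of "cinner x y"] by (simp add: power2_eq_square)
    show ?thesis unfolding expand_sq c rx t_def using r cm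
      by (simp add: field_simps complex_norm_square complex_eq_iff power2_eq_square)
  qed
  finally have "(cmod (cinner x y))^2 / r \<le> Re (cinner y y)" by simp
  thus ?thesis using r by (simp add: r_def field_simps mult.commute)
qed

lemma cauchy_schwarz2: "cmod (cinner x y) \<le> cnorm x * cnorm (y::'a::chilbert)"
proof -
  have "(cmod (cinner x y))^2 \<le> (cnorm x * cnorm y)^2"
    using cauchy_schwarz[of x y] by (simp add: power_mult_distrib cnorm_sq)
  thus ?thesis by (rule power2_le_imp_le) simp
qed



lemma Re_cinner_commute: "Re (cinner y (x::'a::chilbert)) = Re (cinner x y)"
  by (subst cinner_commute) simp

lemma cnorm_triangle: "cnorm ((x::'a::chilbert) + y) \<le> cnorm x + cnorm y"
proof -
  have "Re (cinner (x + y) (x + y)) = Re (cinner x x) + Re (cinner y y) + 2 * Re (cinner x y)"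
    by (simp add: cinner_simps Re_cinner_commute[of y x])
  also have "\<dots> \<le> (cnorm x)^2 + (cnorm y)^2 + 2 * (cnorm x * cnorm y)"
    using cauchy_schwarz2[of x y] complex_Re_le_cmod[of "cinner x y"] by (simp add: cnorm_sq)
  also have "\<dots> = (cnorm x + cnorm y)^2" by (simp add: power2_eq_square algebra_simps)
  finally have "(cnorm (x+y))^2 \<le> (cnorm x + cnorm y)^2" by (simp add: cnorm_sq)
  thus ?thesis by (rule power2_le_imp_le) simp
qed

lemma cnorm_triangle_diff: "cnorm ((x::'a::chilbert) - z) \<le> cnorm (x - y) + cnorm (y - z)"
  using cnorm_triangle[of "x - y" "y - z"] by simp

lemma orth_expand:
  assumes "u \<noteq> (0::'a::chilbert)"
  shows "cinner (y - (cinner u y / complex_of_real (Re (cinner u u))) *\<^sub>C u) (y - (cinner u y / complex_of_real (Re (cinner u u))) *\<^sub>C u)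
     = cinner y y - complex_of_real ((cmod (cinner u y))^2 / Re (cinner u u))"
proof -
  define r where "r = Re (cinner u u)"
  have r: "r > 0" using cinner_pos[OF assms] by (simp add: r_def)
  have rx: "cinner u u = complex_of_real r" by (simp add: r_def cinner_self_real[of u, symmetric])
  have c: "cinner y u = cnj (cinner u y)" by (rule cinner_commute)
  have cm: "cmod (cinner u y) * cmod (cinner u y) = Re (cinner u y) * Re (cinner u y) + Im (cinner u y) * Im (cinner u y)"
    using cmod_power2[of "cinner u y"] by (simp add: power2_eq_square)
  show ?thesis unfolding expand_sq c rx r_def[symmetric] using r cm
    by (simp add: field_simps complex_norm_square complex_eq_iff power2_eq_square)
qed

lemma two_scaleC: "(2::complex) *\<^sub>C (x::'a::chilbert) = x + x"
  using scaleC_add_left[of 1 1 x] by (simp add: scaleC_one)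

lemma cnorm_two: "cnorm ((2::complex) *\<^sub>C (x::'a::chilbert)) = 2 * cnorm x"
  by (simp add: cnorm_scaleC)

lemma parallelogram: "Re (cinner ((a::'a::chilbert) - b) (a - b)) =
   2 * Re (cinner a a) + 2 * Re (cinner b b) - Re (cinner (a + b) (a + b))"
  by (simp add: cinner_simps)

definition cconv :: "(nat \<Rightarrow> 'a::chilbert) \<Rightarrow> 'a \<Rightarrow> bool" where
  "cconv X L \<longleftrightarrow> (\<lambda>n. cnorm (X n - L)) \<longlonglongrightarrow> 0"

lemma complete':
  assumes "\<And>e. e > 0 \<Longrightarrow> \<exists>N. \<forall>m\<ge>N. \<forall>n\<ge>N. cnorm ((X::nat \<Rightarrow> 'a::chilbert) m - X n) < e"
  shows "\<exists>L. cconv X L"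
proof -
  obtain L where L: "\<forall>e>0. \<exists>N::nat. \<forall>n\<ge>N. cnorm (X n - L) < e"
    using complete[of X] assms unfolding cnorm_def by blast
  have "cconv X L" unfolding cconv_def LIMSEQ_iff using L by simp
  thus ?thesis by blast
qed

lemma closed_subspaceD:
  assumes "closed_subspace H"
  shows "0 \<in> H" "x \<in> H \<Longrightarrow> y \<in> H \<Longrightarrow> x + y \<in> H" "x \<in> H \<Longrightarrow> c *\<^sub>C x \<in> H"
    "(\<And>n. X n \<in> H) \<Longrightarrow> cconv X L \<Longrightarrow> L \<in> H"
  using assms unfolding closed_subspace_def cconv_def by blast+

lemma closed_subspace_minus: "closed_subspace H \<Longrightarrow> x \<in> H \<Longrightarrow> - x \<in> H"
  using closed_subspaceD(3)[of H x "-1"] by (simp add: scaleC_minus_left scaleC_one)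

lemma closed_subspace_diff: "closed_subspace H \<Longrightarrow> x \<in> H \<Longrightarrow> y \<in> H \<Longrightarrow> x - y \<in> H"
  using closed_subspaceD(2)[of H x "-y"] closed_subspace_minus[of H y] by simp

lemma proj_exists:
  assumes N: "closed_subspace N"
  shows "\<exists>w\<in>N. \<forall>u\<in>N. cinner u ((x::'a::chilbert) - w) = 0"
proof -
  define D where "D = (\<lambda>w. cnorm (x - w)) ` N"
  define d where "d = Inf D"
  have D0: "D \<noteq> {}" using closed_subspaceD(1)[OF N] by (auto simp: D_def)
  have bdd: "bdd_below D" unfolding D_def by (rule bdd_belowI[of _ 0]) auto
  have dlow: "d \<le> cnorm (x - w)" if "w \<in> N" for w
    unfolding d_def D_def by (rule cInf_lower) (use that bdd in \<open>auto simp: D_def\<close>)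
  have d0: "0 \<le> d" unfolding d_def using D0 by (intro cInf_greatest) (auto simp: D_def)
  have "\<exists>w\<in>N. cnorm (x - w) < d + 1 / (real n + 1)" for n
  proof -
    have "Inf D < d + 1 / (real n + 1)" unfolding d_def by simp
    then obtain z where "z \<in> D" "z < d + 1 / (real n + 1)" using cInf_lessD[OF D0] by blast
    thus ?thesis by (auto simp: D_def)
  qed
  then obtain W where W: "\<And>n. W n \<in> N" "\<And>n. cnorm (x - W n) < d + 1 / (real n + 1)" by metis
  define eps where "eps = (\<lambda>n::nat. 1 / (real n + 1))"
  have eps: "0 < eps n" "eps n \<le> 1" for n by (auto simp: eps_def)
  have sq: "Re (cinner (x - W n) (x - W n)) \<le> d^2 + eps n * (2 * d + 1)" for n
  proof -
    have "cnorm (x - W n) \<le> d + eps n" using W(2)[of n] by (simp add: eps_def)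
    hence "(cnorm (x - W n))^2 \<le> (d + eps n)^2" by (rule power_mono) simp
    also have "\<dots> = d^2 + eps n * (2 * d + eps n)" by (simp add: power2_eq_square algebra_simps)
    also have "\<dots> \<le> d^2 + eps n * (2 * d + 1)" using eps[of n] by (intro add_left_mono mult_left_mono) auto
    finally show ?thesis by (simp add: cnorm_sq)
  qed
  have cauchy: "Re (cinner (W m - W n) (W m - W n)) \<le> 2 * (eps m + eps n) * (2 * d + 1)" for m n
  proof -
    define mid where "mid = (1/2::complex) *\<^sub>C (W m + W n)"
    have midN: "mid \<in> N" unfolding mid_def using W(1) closed_subspaceD[OF N] by blast
    have "(x - W n) + (x - W m) = (2::complex) *\<^sub>C (x - mid)"
      unfolding mid_def scaleC_diff_right scaleC_scaleC by (simp add: scaleC_one two_scaleC algebra_simps)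
    hence "Re (cinner ((x - W n) + (x - W m)) ((x - W n) + (x - W m))) = 4 * (cnorm (x - mid))^2"
      by (simp add: cnorm_sq[symmetric] cnorm_scaleC power2_eq_square)
    also have "\<dots> \<ge> 4 * d^2" using dlow[OF midN] d0 by (simp add: power_mono)
    finally have big: "Re (cinner ((x - W n) + (x - W m)) ((x - W n) + (x - W m))) \<ge> 4 * d^2" .
    have "W m - W n = (x - W n) - (x - W m)" by simp
    hence "Re (cinner (W m - W n) (W m - W n)) = 2 * Re (cinner (x - W n) (x - W n)) + 2 * Re (cinner (x - W m) (x - W m))
        - Re (cinner ((x - W n) + (x - W m)) ((x - W n) + (x - W m)))"
      using parallelogram[of "x - W n" "x - W m"] by simp
    also have "\<dots> \<le> 2 * (d^2 + eps n * (2 * d + 1)) + 2 * (d^2 + eps m * (2 * d + 1)) - 4 * d^2"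
      using sq[of n] sq[of m] big by (smt (verit))
    also have "\<dots> = 2 * (eps m + eps n) * (2 * d + 1)" by (simp add: algebra_simps)
    finally show ?thesis .
  qed
  have "\<exists>M. \<forall>m\<ge>M. \<forall>n\<ge>M. cnorm (W m - W n) < e" if e: "e > 0" for e
  proof -
    obtain M::nat where M: "4 * (2 * d + 1) / e^2 < real M" using reals_Archimedean2 by blast
    have epsM: "eps k \<le> 1 / (real M + 1)" if "k \<ge> M" for k
      unfolding eps_def using that by (intro divide_left_mono) auto
    have key: "4 * (2 * d + 1) / (real M + 1) < e^2"
      using M e d0 by (simp add: field_simps) (smt (verit) mult_pos_pos zero_less_power)
    show ?thesis
    proof (intro exI allI impI)
      fix m n assume mn: "m \<ge> M" "n \<ge> M"
      have "(cnorm (W m - W n))^2 \<le> 2 * (eps m + eps n) * (2 * d + 1)" using cauchy[of m n] by (simp add: cnorm_sq)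
      also have "\<dots> \<le> 2 * (2 / (real M + 1)) * (2 * d + 1)"
        using epsM[OF mn(1)] epsM[OF mn(2)] d0 by (intro mult_right_mono mult_left_mono) auto
      also have "\<dots> < e^2" using key by (simp add: field_simps)
      finally show "cnorm (W m - W n) < e" using e by (smt (verit) cnorm_ge0 power_mono)
    qed
  qed
  then obtain L where L: "cconv W L" using complete'[of W] by blast
  have LN: "L \<in> N" using closed_subspaceD(4)[OF N W(1) L] .
  have "cnorm (x - L) \<le> d"
  proof (rule field_le_epsilon)
    fix e :: real assume e: "e > 0"
    from L have "\<exists>n0. \<forall>n\<ge>n0. cnorm (W n - L) < e/2" unfolding cconv_def LIMSEQ_iff using e
      by (metis (no_types, lifting) abs_of_nonneg cnorm_ge0 diff_zero half_gt_zero real_norm_def)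
    then obtain n0 where n0: "\<forall>n\<ge>n0. cnorm (W n - L) < e/2" by blast
    obtain n1::nat where n1: "2 / e < real n1" using reals_Archimedean2 by blast
    define n where "n = max n0 n1"
    have "real n1 \<le> real n" by (simp add: n_def)
    hence "2 / e < real n + 1" using n1 by linarith
    hence "2 < e * (real n + 1)" using e by (simp add: field_simps)
    hence "eps n < e / 2" unfolding eps_def using e by (simp add: field_simps)
    hence "cnorm (x - W n) < d + e/2" using W(2)[of n] by (simp add: eps_def)
    moreover have "cnorm (W n - L) < e/2" using n0 by (simp add: n_def)
    ultimately show "cnorm (x - L) \<le> d + e" using cnorm_triangle_diff[of x L "W n"] by linarith
  qed
  hence minL: "cnorm (x - L) \<le> cnorm (x - w)" if "w \<in> N" for w using dlow[OF that] by linarith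
  have "cinner u (x - L) = 0" if u: "u \<in> N" for u
  proof (rule ccontr)
    assume nz: "cinner u (x - L) \<noteq> 0"
    hence u0: "u \<noteq> 0" by auto
    define y where "y = x - L"
    define t where "t = cinner u y / complex_of_real (Re (cinner u u))"
    have "L + t *\<^sub>C u \<in> N" using closed_subspaceD[OF N] LN u by blast
    hence "cnorm y \<le> cnorm (y - t *\<^sub>C u)" using minL[of "L + t *\<^sub>C u"] by (simp add: y_def algebra_simps)
    hence "(cnorm y)^2 \<le> (cnorm (y - t *\<^sub>C u))^2" by (rule power_mono) simp
    also have "\<dots> = Re (cinner y y) - (cmod (cinner u y))^2 / Re (cinner u u)"
      unfolding cnorm_sq t_def orth_expand[OF u0] by simp
    finally have "(cmod (cinner u y))^2 / Re (cinner u u) \<le> 0" by (simp add: cnorm_sq)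
    moreover have "Re (cinner u u) > 0" using cinner_pos[OF u0] .
    moreover have "cmod (cinner u y) > 0" using nz by (simp add: y_def)
    ultimately show False by (simp add: field_simps)
  qed
  thus ?thesis using LN by blast
qed



lemma squeeze0: "(\<And>n. 0 \<le> a n) \<Longrightarrow> (\<And>n. a n \<le> b n) \<Longrightarrow> b \<longlonglongrightarrow> 0 \<Longrightarrow> (a::nat \<Rightarrow> real) \<longlonglongrightarrow> 0"
  by (rule tendsto_sandwich[of "\<lambda>_. 0" a sequentially b]) auto


lemma BK_add: "f \<in> BK \<Longrightarrow> f (x + y) = f x + f y" by (simp add: BK_def clinear_def)
lemma BK_scale: "f \<in> BK \<Longrightarrow> f (c *\<^sub>C x) = c *\<^sub>C f x" by (simp add: BK_def clinear_def)
lemma BK_zero: "f \<in> BK \<Longrightarrow> f 0 = 0"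
  using BK_scale[of f 0 0] by simp
lemma BK_minus: "f \<in> BK \<Longrightarrow> f (- x) = - f x"
  using BK_scale[of f "-1" x] by (simp add: scaleC_minus_left scaleC_one)
lemma BK_diff: "f \<in> BK \<Longrightarrow> f (x - y) = f x - f y"
  using BK_add[of f x "-y"] BK_minus[of f y] by simp
lemma BK_bound: "f \<in> BK \<Longrightarrow> \<exists>M\<ge>0. \<forall>x. cnorm (f x) \<le> M * cnorm x"
proof -
  assume "f \<in> BK"
  then obtain M where M: "\<forall>x. cnorm (f x) \<le> M * cnorm x" by (auto simp: BK_def)
  have "\<forall>x. cnorm (f x) \<le> max M 0 * cnorm x"
    using M by (metis cnorm_ge0 max.cobounded1 mult_right_mono order_trans)
  thus ?thesis by (intro exI[of _ "max M 0"]) auto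
qed

lemma BKI: "(\<And>x y. f (x + y) = f x + f y) \<Longrightarrow> (\<And>c x. f (c *\<^sub>C x) = c *\<^sub>C f x) \<Longrightarrow>
   (\<And>x. cnorm (f x) \<le> M * cnorm x) \<Longrightarrow> f \<in> BK"
  unfolding BK_def clinear_def by blast

lemma BK_comp: "f \<in> BK \<Longrightarrow> g \<in> BK \<Longrightarrow> f \<circ> g \<in> BK"
proof -
  assume f: "f \<in> BK" and g: "g \<in> BK"
  obtain M where M: "M \<ge> 0" "\<forall>x. cnorm (f x) \<le> M * cnorm x" using BK_bound[OF f] by blast
  obtain M' where M': "\<forall>x. cnorm (g x) \<le> M' * cnorm x" using BK_bound[OF g] by blast
  show ?thesis
  proof (rule BKI[where M = "M * M'"])
    fix x
    have "cnorm (f (g x)) \<le> M * cnorm (g x)" using M by blast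
    also have "\<dots> \<le> M * (M' * cnorm x)" using M M' by (intro mult_left_mono) auto
    finally show "cnorm ((f \<circ> g) x) \<le> M * M' * cnorm x" by (simp add: mult.assoc)
  qed (simp_all add: BK_add[OF f] BK_add[OF g] BK_scale[OF f] BK_scale[OF g])
qed

lemma BK_id: "id \<in> BK" by (rule BKI[where M=1]) auto

lemma BK_cont: "f \<in> BK \<Longrightarrow> cconv X L \<Longrightarrow> cconv (\<lambda>n. f (X n)) (f L)"
proof -
  assume f: "f \<in> BK" and X: "cconv X L"
  obtain M where M: "M \<ge> 0" "\<forall>x. cnorm (f x) \<le> M * cnorm x" using BK_bound[OF f] by blast
  have t: "(\<lambda>n. M * cnorm (X n - L)) \<longlonglongrightarrow> 0" using X unfolding cconv_def
    using tendsto_mult_right_zero by blast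
  show ?thesis unfolding cconv_def
    by (rule squeeze0[OF _ _ t]) (use M in \<open>auto simp: BK_diff[OF f, symmetric]\<close>)
qed

lemma closed_subspace_preimage:
  assumes "closed_subspace W" "f \<in> BK"
  shows "closed_subspace {x. f x \<in> W}"
  unfolding closed_subspace_def
proof (intro conjI allI impI ballI)
  show "0 \<in> {x. f x \<in> W}" using closed_subspaceD(1)[OF assms(1)] BK_zero[OF assms(2)] by simp
next
  fix x y assume "x \<in> {x. f x \<in> W}" "y \<in> {x. f x \<in> W}"
  thus "x + y \<in> {x. f x \<in> W}" using closed_subspaceD(2)[OF assms(1)] BK_add[OF assms(2)] by simp
next
  fix c x assume "x \<in> {x. f x \<in> W}"
  thus "c *\<^sub>C x \<in> {x. f x \<in> W}" using closed_subspaceD(3)[OF assms(1)] BK_scale[OF assms(2)] by simp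
next
  fix X L assume h: "(\<forall>n. X n \<in> {x. f x \<in> W}) \<and> (\<lambda>n. cnorm (X n - L)) \<longlonglongrightarrow> 0"
  hence "cconv (\<lambda>n. f (X n)) (f L)" using BK_cont[OF assms(2)] by (simp add: cconv_def)
  thus "L \<in> {x. f x \<in> W}" using closed_subspaceD(4)[OF assms(1), of "\<lambda>n. f (X n)"] h by auto
qed

lemma closed_subspace_zero: "closed_subspace {0::'a::chilbert}"
  unfolding closed_subspace_def
proof (intro conjI allI impI ballI)
  fix X L assume h: "(\<forall>n. X n \<in> {0::'a}) \<and> (\<lambda>n. cnorm (X n - L)) \<longlonglongrightarrow> 0"
  hence "(\<lambda>n. cnorm (X n - L)) = (\<lambda>n. cnorm L)" by (simp add: cnorm_minus)
  hence "(\<lambda>n. cnorm L) \<longlonglongrightarrow> 0" using h by simp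
  hence "cnorm L = 0" by (simp add: LIMSEQ_const_iff)
  thus "L \<in> {0}" by simp
qed auto

lemma closed_subspace_kernel: "f \<in> BK \<Longrightarrow> closed_subspace {x. f x = 0}"
  using closed_subspace_preimage[OF closed_subspace_zero, of f] by simp

lemma closed_subspace_Inter: "(\<And>S. S \<in> F \<Longrightarrow> closed_subspace S) \<Longrightarrow> closed_subspace (\<Inter>F)"
  unfolding closed_subspace_def by blast

lemma closed_subspace_UNIV: "closed_subspace (UNIV :: 'a::chilbert set)"
  unfolding closed_subspace_def by blast

definition proj :: "'a::chilbert set \<Rightarrow> 'a \<Rightarrow> 'a" where
  "proj N x = (SOME w. w \<in> N \<and> (\<forall>u\<in>N. cinner u (x - w) = 0))"

lemma proj:
  assumes "closed_subspace N"
  shows "proj N x \<in> N" "u \<in> N \<Longrightarrow> cinner u (x - proj N x) = 0"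
proof -
  have "\<exists>w. w \<in> N \<and> (\<forall>u\<in>N. cinner u (x - w) = 0)" using proj_exists[OF assms] by blast
  hence "proj N x \<in> N \<and> (\<forall>u\<in>N. cinner u (x - proj N x) = 0)"
    unfolding proj_def by (rule someI_ex)
  thus "proj N x \<in> N" "u \<in> N \<Longrightarrow> cinner u (x - proj N x) = 0" by auto
qed

lemma proj_unique:
  assumes N: "closed_subspace N" and w: "w \<in> N" and o: "\<And>u. u \<in> N \<Longrightarrow> cinner u (x - w) = 0"
  shows "proj N x = w"
proof -
  define w' where "w' = proj N x"
  have d: "w - w' \<in> N" using closed_subspace_diff[OF N w proj(1)[OF N]] by (simp add: w'_def)
  have "cinner (w - w') (w - w') = cinner (w - w') ((x - w') - (x - w))" by simp
  also have "\<dots> = 0"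
  proof -
    have e1: "cinner (w-w') (x - w') = 0" using proj(2)[OF N d, of x] by (simp add: w'_def)
    have e2: "cinner (w-w') (x - w) = 0" using o[OF d] .
    show ?thesis unfolding cinner_diff_right[of "w-w'" "x-w'" "x-w"] e1 e2 by simp
  qed
  finally show ?thesis by (simp add: w'_def)
qed

lemma proj_id: "closed_subspace N \<Longrightarrow> w \<in> N \<Longrightarrow> proj N w = w"
  by (rule proj_unique) auto

lemma orth_sym: "cinner u x = 0 \<Longrightarrow> cinner x (u::'a::chilbert) = 0"
  by (subst cinner_commute) simp

lemma proj_BK: assumes N: "closed_subspace N" shows "proj N \<in> BK"
proof (rule BKI[where M=1])
  fix x y
  show "proj N (x + y) = proj N x + proj N y"
    apply (rule proj_unique[OF N])
    using closed_subspaceD(2)[OF N proj(1)[OF N] proj(1)[OF N]] apply blast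
  proof -
    fix u assume u: "u \<in> N"
    have "x + y - (proj N x + proj N y) = (x - proj N x) + (y - proj N y)" by simp
    thus "cinner u (x + y - (proj N x + proj N y)) = 0"
      using proj(2)[OF N u, of x] proj(2)[OF N u, of y] by (simp only: cinner_add_right) simp
  qed
next
  fix c x
  show "proj N (c *\<^sub>C x) = c *\<^sub>C proj N x"
    apply (rule proj_unique[OF N])
    using closed_subspaceD(3)[OF N proj(1)[OF N]] apply blast
    using proj(2)[OF N] by (simp add: scaleC_diff_right[symmetric] cinner_scaleC_right)
next
  fix x
  define w where "w = proj N x"
  have o: "cinner w (x - w) = 0" using proj[OF N] by (simp add: w_def)
  have "Re (cinner x x) = Re (cinner (w + (x - w)) (w + (x - w)))" by simp
  also have "\<dots> = Re (cinner w w) + Re (cinner (x - w) (x - w))"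
    unfolding cinner_add_left cinner_add_right using o orth_sym[OF o] by simp
  finally have "(cnorm w)^2 \<le> (cnorm x)^2" by (simp add: cnorm_sq)
  hence "cnorm w \<le> cnorm x" by (rule power2_le_imp_le) simp
  thus "cnorm (proj N x) \<le> 1 * cnorm x" by (simp add: w_def)
qed

lemma proj_idem: "closed_subspace N \<Longrightarrow> proj N (proj N x) = proj N x"
  using proj_id proj(1) by blast

lemma proj_selfadj: assumes N: "closed_subspace N"
  shows "cinner (proj N x) y = cinner x (proj N y)"
proof -
  have a: "cinner (proj N x) y = cinner (proj N x) (proj N y)"
    using proj(2)[OF N proj(1)[OF N], of x y] by (simp add: cinner_diff_right)
  have "cinner (proj N y) (x - proj N x) = 0" using proj[OF N] by blast
  hence b: "cinner x (proj N y) = cinner (proj N x) (proj N y)"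
    using orth_sym by (metis cinner_diff_left eq_iff_diff_eq_0)
  show ?thesis using a b by simp
qed

lemma adj_unique: "(\<And>x y. cinner (f x) y = cinner x (g y)) \<Longrightarrow> adj f = (g :: 'a::chilbert \<Rightarrow> 'a)"
  unfolding adj_def
proof (rule the_equality)
  fix g' assume h: "\<And>x y. cinner (f x) y = cinner x (g y)" and h': "\<forall>x y. cinner (f x) y = cinner x (g' y)"
  show "g' = g"
  proof
    fix y show "g' y = g y" by (rule cinner_ext) (use h h' in metis)
  qed
qed blast

lemma proj_is_projection: "closed_subspace N \<Longrightarrow> is_projection (proj N)"
proof -
  assume N: "closed_subspace N"
  have "proj N \<circ> proj N = proj N" using proj_idem[OF N] by (simp add: fun_eq_iff)
  moreover have "adj (proj N) = proj N" by (rule adj_unique) (rule proj_selfadj[OF N])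
  ultimately show ?thesis unfolding is_projection_def using proj_BK[OF N] by simp
qed

lemma riesz:
  fixes \<phi> :: "'a::chilbert \<Rightarrow> complex"
  assumes add: "\<And>x y. \<phi> (x + y) = \<phi> x + \<phi> y" and sc: "\<And>c x. \<phi> (c *\<^sub>C x) = c * \<phi> x"
    and bd: "\<And>x. cmod (\<phi> x) \<le> M * cnorm x"
  shows "\<exists>r. \<forall>x. \<phi> x = cinner r x"
proof (cases "\<forall>x. \<phi> x = 0")
  case True thus ?thesis by (intro exI[of _ 0]) simp
next
  case False
  then obtain x0 where x0: "\<phi> x0 \<noteq> 0" by blast
  have z0: "\<phi> 0 = 0" using sc[of 0 0] by simp
  have minus: "\<phi> (x - y) = \<phi> x - \<phi> y" for x y
    using add[of "x - y" y] by simp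
  define N where "N = {x. \<phi> x = 0}"
  have N: "closed_subspace N" unfolding closed_subspace_def N_def
  proof (intro conjI allI impI ballI)
    fix X L assume h: "(\<forall>n. X n \<in> {x. \<phi> x = 0}) \<and> (\<lambda>n. cnorm (X n - L)) \<longlonglongrightarrow> 0"
    have le: "cmod (\<phi> L) \<le> M * cnorm (X n - L)" for n
      using bd[of "L - X n"] h minus[of L "X n"] by (simp add: cnorm_commute)
    have "(\<lambda>n. M * cnorm (X n - L)) \<longlonglongrightarrow> 0" using h tendsto_mult_right_zero by blast
    hence "cmod (\<phi> L) \<le> 0" using le by (intro LIMSEQ_le_const[where X="\<lambda>n. M * cnorm (X n - L)"]) auto
    thus "L \<in> {x. \<phi> x = 0}" by simp
  qed (use z0 add sc in auto)
  define z where "z = x0 - proj N x0"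
  have pz: "\<phi> z = \<phi> x0" using proj(1)[OF N, of x0] by (simp add: z_def minus N_def)
  have zo: "cinner z u = 0" if "u \<in> N" for u using proj(2)[OF N that, of x0] orth_sym by (simp add: z_def)
  have zn: "z \<noteq> 0" using pz x0 z0 by auto
  have eq: "cinner z x = \<phi> x / \<phi> z * cinner z z" for x
  proof -
    have "x - (\<phi> x / \<phi> z) *\<^sub>C z \<in> N" using pz x0 by (simp add: N_def minus sc)
    hence "cinner z (x - (\<phi> x / \<phi> z) *\<^sub>C z) = 0" by (rule zo)
    thus ?thesis by (simp add: cinner_diff_right cinner_scaleC_right)
  qed
  have zz: "cinner z z \<noteq> 0" using zn by simp
  define r where "r = (cnj (\<phi> z / cinner z z)) *\<^sub>C z"
  have pz0: "\<phi> z \<noteq> 0" using pz x0 by simp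
  have "\<phi> x = cinner r x" for x
  proof -
    have "cinner r x = (\<phi> z / cinner z z) * cinner z x" unfolding r_def cinner_scaleC_left by simp
    also have "\<dots> = (\<phi> z / cinner z z) * (\<phi> x / \<phi> z * cinner z z)" by (simp only: eq[of x])
    also have "\<dots> = \<phi> x" using zz pz0 by (simp add: field_simps)
    finally show ?thesis by simp
  qed
  thus ?thesis by blast
qed

lemma adj_exists: assumes f: "f \<in> BK" shows "\<exists>g. \<forall>x y. cinner (f x) y = cinner x (g y)"
proof -
  obtain M where M: "M \<ge> 0" "\<forall>x. cnorm (f x) \<le> M * cnorm x" using BK_bound[OF f] by blast
  have "\<exists>r. \<forall>x. cinner y (f x) = cinner r x" for y
  proof (rule riesz[where M = "cnorm y * M"])
    fix x
    have "cmod (cinner y (f x)) \<le> cnorm y * cnorm (f x)" by (rule cauchy_schwarz2)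
    also have "\<dots> \<le> cnorm y * (M * cnorm x)" using M by (intro mult_left_mono) auto
    finally show "cmod (cinner y (f x)) \<le> cnorm y * M * cnorm x" by (simp add: mult.assoc)
  qed (simp_all add: BK_add[OF f] BK_scale[OF f] cinner_simps)
  then obtain g where g: "\<And>y x. cinner y (f x) = cinner (g y) x" by metis
  have "cinner (f x) y = cinner x (g y)" for x y
    by (metis g cinner_commute)
  thus ?thesis by blast
qed

lemma adj_prop: "f \<in> BK \<Longrightarrow> cinner (f x) y = cinner x (adj f y)"
proof -
  assume "f \<in> BK"
  then obtain g where g: "\<forall>x y. cinner (f x) y = cinner x (g y)" using adj_exists by blast
  hence "adj f = g" by (intro adj_unique) blast
  thus ?thesis using g by simp
qed

lemma cinner_ext_left: "(\<And>z. cinner (x::'a::chilbert) z = cinner y z) \<Longrightarrow> x = y"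
  by (rule cinner_ext) (metis cinner_commute)



lemma cnorm_diff_le: "cnorm ((a::'a::chilbert) - b) \<le> cnorm a + cnorm b"
  using cnorm_triangle[of a "-b"] by (simp add: cnorm_minus)

lemma BK_sub: "f \<in> BK \<Longrightarrow> g \<in> BK \<Longrightarrow> (\<lambda>x. f x - g x) \<in> BK"
proof -
  assume f: "f \<in> BK" and g: "g \<in> BK"
  obtain M where M: "\<forall>x. cnorm (f x) \<le> M * cnorm x" using BK_bound[OF f] by blast
  obtain M' where M': "\<forall>x. cnorm (g x) \<le> M' * cnorm x" using BK_bound[OF g] by blast
  show ?thesis
  proof (rule BKI[where M = "M + M'"])
    fix x show "cnorm (f x - g x) \<le> (M + M') * cnorm x"
      using cnorm_diff_le[of "f x" "g x"] M M' by (smt (verit) distrib_right)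
  qed (simp_all add: BK_add[OF f] BK_add[OF g] BK_scale[OF f] BK_scale[OF g] scaleC_diff_right)
qed

lemma BK_scaleid: "(\<lambda>x. c *\<^sub>C (x::'a::chilbert)) \<in> BK"
  by (rule BKI[where M = "cmod c"]) (simp_all add: scaleC_add_right scaleC_scaleC mult.commute cnorm_scaleC)

lemma adj_BK: assumes f: "f \<in> BK" shows "adj f \<in> BK"
proof -
  define g where "g = adj f"
  have g: "\<And>x y. cinner (f x) y = cinner x (g y)" using adj_prop[OF f] by (simp add: g_def)
  obtain M where M: "M \<ge> 0" "\<forall>x. cnorm (f x) \<le> M * cnorm x" using BK_bound[OF f] by blast
  show ?thesis unfolding g_def[symmetric]
  proof (rule BKI[where M = M])
    fix x y show "g (x + y) = g x + g y"
      by (rule cinner_ext) (simp add: g[symmetric] cinner_simps)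
  next
    fix c x show "g (c *\<^sub>C x) = c *\<^sub>C g x"
      by (rule cinner_ext) (simp add: g[symmetric] cinner_simps)
  next
    fix y
    have "(cnorm (g y))^2 = Re (cinner (f (g y)) y)" by (simp add: cnorm_sq g)
    also have "\<dots> \<le> cmod (cinner (f (g y)) y)" by (rule complex_Re_le_cmod)
    also have "\<dots> \<le> cnorm (f (g y)) * cnorm y" by (rule cauchy_schwarz2)
    also have "\<dots> \<le> M * cnorm (g y) * cnorm y" using M by (intro mult_right_mono) auto
    finally have "cnorm (g y) * cnorm (g y) \<le> cnorm (g y) * (M * cnorm y)" by (simp add: power2_eq_square algebra_simps)
    thus "cnorm (g y) \<le> M * cnorm y"
    proof (cases "cnorm (g y) = 0")
      case True thus ?thesis using M by simp
    next
      case False hence "cnorm (g y) > 0" using cnorm_ge0[of "g y"] by linarith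
      thus ?thesis using \<open>cnorm (g y) * cnorm (g y) \<le> cnorm (g y) * (M * cnorm y)\<close>
        by (simp add: mult_le_cancel_left)
    qed
  qed
qed

lemma polarization:
  assumes f: "f \<in> BK" and z: "\<And>x. cinner x (f x) = 0"
  shows "f x = 0"
proof -
  have s: "cinner x (f y) + cinner y (f x) = 0" for x y
    using z[of "x + y"] z[of x] z[of y] by (simp add: BK_add[OF f] cinner_simps add.commute)
  have d: "cinner x (f y) = cinner y (f x)" for x y
    using s[of x "\<i> *\<^sub>C y"] by (simp add: BK_scale[OF f] cinner_simps)
  have "cinner (f x) (f x) = 0" using s[of "f x" x] d[of "f x" x] by simp
  thus ?thesis by simp
qed

lemma commutant_comp: "a \<in> commutant S \<Longrightarrow> b \<in> commutant S \<Longrightarrow> a \<circ> b \<in> commutant S"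
  unfolding commutant_def using BK_comp by (auto simp: comp_assoc) (metis comp_assoc)

lemma commutant_id: "id \<in> commutant S"
  unfolding commutant_def using BK_id by auto

lemma proj_commute:
  assumes Wc: "closed_subspace W" and f: "f \<in> BK"
    and fW: "\<And>w. w \<in> W \<Longrightarrow> f w \<in> W" and gW: "\<And>w. w \<in> W \<Longrightarrow> adj f w \<in> W"
  shows "proj W (f x) = f (proj W x)"
proof (rule proj_unique[OF Wc])
  show "f (proj W x) \<in> W" using fW proj(1)[OF Wc] by blast
  fix u assume u: "u \<in> W"
  have "cinner u (f x - f (proj W x)) = cinner u (f (x - proj W x))" by (simp add: BK_diff[OF f])
  also have "\<dots> = cnj (cinner (f (x - proj W x)) u)" by (rule cinner_commute)
  also have "\<dots> = cnj (cinner (x - proj W x) (adj f u))" by (simp add: adj_prop[OF f])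
  also have "\<dots> = 0" using proj(2)[OF Wc gW[OF u], of x] orth_sym by simp
  finally show "cinner u (f x - f (proj W x)) = 0" .
qed



theorem lemma2p4:
  fixes H :: "'k::chilbert set"
    and T :: "'s::comm_monoid_add \<Rightarrow> ('k \<Rightarrow> 'k) \<Rightarrow> ('k \<Rightarrow> 'k)"
    and p :: "'k \<Rightarrow> 'k"
    and B :: "('k \<Rightarrow> 'k) set"
    and \<theta> :: "'s \<Rightarrow> ('k \<Rightarrow> 'k) \<Rightarrow> ('k \<Rightarrow> 'k)"
  assumes "closed_subspace H"
    and "cp_semigroup (ops_on H) T"
    and "minimal_dilation H (ops_on H) T p B \<theta>"
  shows "B = BK"
proof -
  have Hc: "closed_subspace H" by fact
  have vN: "vN_algebra B" and pB: "p \<in> B" and pproj: "is_projection p" and rp: "range p = H"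
    and A: "ops_on H = {p \<circ> b \<circ> p | b. b \<in> B}" and cc: "central_carrier B p = id"
    using assms(3) unfolding minimal_dilation_def dilation_def by auto
  define C where "C = commutant B"
  have BBK: "B \<subseteq> BK" and Badj: "\<And>a. a \<in> B \<Longrightarrow> adj a \<in> B" and BC: "commutant C = B"
    using vN unfolding vN_algebra_def C_def by auto
  have CBK: "C \<subseteq> BK" unfolding C_def commutant_def by auto
  have Ccomm: "\<And>a c. a \<in> B \<Longrightarrow> c \<in> C \<Longrightarrow> a \<circ> c = c \<circ> a" unfolding C_def commutant_def by auto
  have Bcomm: "\<And>a c. a \<in> B \<Longrightarrow> c \<in> C \<Longrightarrow> c \<circ> a = a \<circ> c"
    using BC unfolding commutant_def by auto
  have Ccomm': "\<And>a c x. a \<in> B \<Longrightarrow> c \<in> C \<Longrightarrow> a (c x) = c (a x)"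
    using Ccomm by (metis comp_apply)
  have Bcompos: "a \<in> B \<Longrightarrow> b \<in> B \<Longrightarrow> a \<circ> b \<in> B" for a b
    using commutant_comp[of a C b] BC by simp
  have idB: "id \<in> B" using commutant_id[of C] BC by simp
  have pH: "p x \<in> H" for x using rp by auto
  have pfix: "h \<in> H \<Longrightarrow> p h = h" for h
  proof -
    assume "h \<in> H" then obtain y where y: "h = p y" using rp by auto
    have "p \<circ> p = p" using pproj unfolding is_projection_def by simp
    thus "p h = h" using y by (metis comp_apply)
  qed
  have scal: "\<exists>lam. \<forall>h\<in>H. c h = lam *\<^sub>C h" if c: "c \<in> C" for c
  proof (cases "\<exists>h0\<in>H. h0 \<noteq> 0")
    case False
    thus ?thesis using BK_zero[of c] c CBK by (intro exI[of _ 0]) fastforce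
  next
    case True
    then obtain h0 where h0: "h0 \<in> H" "h0 \<noteq> 0" by blast
    have cBK: "c \<in> BK" using c CBK by auto
    show ?thesis
    proof (intro exI ballI)
      fix k assume k: "k \<in> H"
      define r where "r = (\<lambda>x. cinner h0 x *\<^sub>C k)"
      have rBK: "r \<in> BK"
      proof (rule BKI[where M = "cnorm h0 * cnorm k"])
        fix x show "cnorm (r x) \<le> cnorm h0 * cnorm k * cnorm x"
          unfolding r_def cnorm_scaleC using cauchy_schwarz2[of h0 x]
          by (metis cnorm_ge0 mult.assoc mult.commute mult_right_mono)
      qed (simp_all add: r_def cinner_simps scaleC_add_left scaleC_scaleC)
      have "r \<in> ops_on H" unfolding ops_on_def using rBK closed_subspaceD(3)[OF Hc k] h0(1)
        by (auto simp: r_def)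
      then obtain b where b: "b \<in> B" "r = p \<circ> b \<circ> p" using A by blast
      have "r \<circ> c = c \<circ> r" unfolding b(2) using Ccomm[OF pB c] Ccomm[OF b(1) c]
        by (metis comp_assoc)
      hence "r (c h0) = c (r h0)" by (metis comp_apply)
      hence "cinner h0 (c h0) *\<^sub>C k = cinner h0 h0 *\<^sub>C c k" by (simp add: r_def BK_scale[OF cBK])
      hence "(1 / cinner h0 h0) *\<^sub>C (cinner h0 (c h0) *\<^sub>C k) = c k"
        using h0 by (simp add: scaleC_scaleC scaleC_one)
      thus "c k = (cinner h0 (c h0) / cinner h0 h0) *\<^sub>C k" by (simp add: scaleC_scaleC)
    qed
  qed
  define V where "V = {b h | b h. b \<in> B \<and> h \<in> H}"
  define W where "W = \<Inter> {S. closed_subspace S \<and> V \<subseteq> S}"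
  have Wc: "closed_subspace W" unfolding W_def by (rule closed_subspace_Inter) auto
  have VW: "V \<subseteq> W" unfolding W_def by auto
  have Wmin: "closed_subspace S \<Longrightarrow> V \<subseteq> S \<Longrightarrow> W \<subseteq> S" for S unfolding W_def by auto
  have inv: "x \<in> W \<Longrightarrow> f x \<in> W" if f: "f \<in> BK" "\<And>v. v \<in> V \<Longrightarrow> f v \<in> V" for f x
  proof -
    have "W \<subseteq> {x. f x \<in> W}" using Wmin closed_subspace_preimage[OF Wc f(1)] VW f(2) by blast
    thus "x \<in> W \<Longrightarrow> f x \<in> W" by blast
  qed
  have HV: "H \<subseteq> V"
  proof
    fix h assume "h \<in> H" thus "h \<in> V" unfolding V_def using idB by (metis (mono_tags, lifting) id_apply mem_Collect_eq)
  qed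
  have BV: "a \<in> B \<Longrightarrow> v \<in> V \<Longrightarrow> a v \<in> V" for a v
    unfolding V_def using Bcompos by (auto, metis comp_apply)
  have CV: "c \<in> C \<Longrightarrow> v \<in> V \<Longrightarrow> c v \<in> V" for c v
  proof -
    assume c: "c \<in> C" and "v \<in> V"
    then obtain b h where bh: "v = b h" "b \<in> B" "h \<in> H" unfolding V_def by auto
    have "c v = b (p (c h))" using Ccomm'[OF bh(2) c] Ccomm'[OF pB c] pfix[OF bh(3)] bh(1) by metis
    thus "c v \<in> V" unfolding V_def using bh(2) pH by blast
  qed
  have adjC: "adj c \<in> C" if c: "c \<in> C" for c
  proof -
    have cBK: "c \<in> BK" using c CBK by auto
    have "a \<circ> adj c = adj c \<circ> a" if a: "a \<in> B" for a
    proof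
      fix y
      have aBK: "a \<in> BK" using a BBK by auto
      have "cinner x (a (adj c y)) = cinner x (adj c (a y))" for x
      proof -
        have "cinner x (a (adj c y)) = cinner (adj a x) (adj c y)"
          using adj_prop[OF aBK, of "adj c y" x] cinner_commute by metis
        also have "\<dots> = cinner (c (adj a x)) y" by (simp add: adj_prop[OF cBK])
        also have "\<dots> = cinner (adj a (c x)) y" using Ccomm'[OF Badj[OF a] c] by simp
        also have "\<dots> = cinner (c x) (a y)"
          using adj_prop[OF aBK, of y "c x"] cinner_commute by metis
        also have "\<dots> = cinner x (adj c (a y))" by (simp add: adj_prop[OF cBK])
        finally show ?thesis .
      qed
      thus "(a \<circ> adj c) y = (adj c \<circ> a) y" by (simp add: cinner_ext)
    qed
    thus ?thesis unfolding C_def commutant_def using adj_BK[OF cBK] by auto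
  qed
  define Q where "Q = proj W"
  have QBK: "Q \<in> BK" unfolding Q_def by (rule proj_BK[OF Wc])
  have Qproj: "is_projection Q" unfolding Q_def by (rule proj_is_projection[OF Wc])
  have QC: "Q \<in> C"
  proof -
    have "a \<circ> Q = Q \<circ> a" if a: "a \<in> B" for a
    proof
      fix x
      have aBK: "a \<in> BK" using a BBK by auto
      show "(a \<circ> Q) x = (Q \<circ> a) x" unfolding Q_def comp_apply
        by (rule proj_commute[OF Wc aBK, symmetric])
           (auto intro: inv[OF aBK] inv[OF adj_BK[OF aBK]] BV[OF a] BV[OF Badj[OF a]])
    qed
    thus ?thesis unfolding C_def commutant_def using QBK by auto
  qed
  have QB: "Q \<in> B"
  proof -
    have "c \<circ> Q = Q \<circ> c" if c: "c \<in> C" for c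
    proof
      fix x
      have cBK: "c \<in> BK" using c CBK by auto
      show "(c \<circ> Q) x = (Q \<circ> c) x" unfolding Q_def comp_apply
        by (rule proj_commute[OF Wc cBK, symmetric])
           (auto intro: inv[OF cBK] inv[OF adj_BK[OF cBK]] CV[OF c] CV[OF adjC[OF c]])
    qed
    thus ?thesis using BC unfolding commutant_def using QBK by auto
  qed
  have Qp: "Q \<circ> p = p"
  proof
    fix x show "(Q \<circ> p) x = p x" unfolding Q_def using proj_id[OF Wc] pH HV VW by auto
  qed
  have Qcc: "is_central_carrier B p Q"
    unfolding is_central_carrier_def
  proof (intro conjI allI impI)
    show "Q \<in> B \<inter> commutant B" using QB QC C_def by auto
    show "is_projection Q" "Q \<circ> p = p" by fact+
    fix q assume q: "q \<in> B \<inter> commutant B \<and> is_projection q \<and> q \<circ> p = p"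
    have qC: "q \<in> C" and qB: "q \<in> B" using q C_def by auto
    have qBK: "q \<in> BK" and qq: "q \<circ> q = q" and qa: "adj q = q" using q unfolding is_projection_def by auto
    have qsa: "cinner (q x) y = cinner x (q y)" for x y using adj_prop[OF qBK] qa by simp
    have fixV: "q v = v" if "v \<in> V" for v
    proof -
      obtain b h where bh: "v = b h" "b \<in> B" "h \<in> H" using \<open>v \<in> V\<close> unfolding V_def by auto
      have "q h = h" using pfix[OF bh(3)] q by (metis comp_apply)
      thus ?thesis using Ccomm'[OF bh(2) qC] bh(1) by metis
    qed
    have fixW: "q w = w" if "w \<in> W" for w
    proof -
      have "W \<subseteq> {x. (\<lambda>x. q x - id x) x = 0}"
        using Wmin[OF closed_subspace_kernel[OF BK_sub[OF qBK BK_id]]] fixV by auto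
      thus ?thesis using that by auto
    qed
    have Qq: "Q (q x) = Q x" for x using Ccomm'[OF QB qC] fixW proj(1)[OF Wc] Q_def by metis
    have qqx: "q (q x) = q x" for x using qq by (metis comp_apply)
    show "op_le Q q" unfolding op_le_def pos_op_def
    proof
      fix x
      define z where "z = q x - Q x"
      have qz: "q z = z" unfolding z_def using BK_diff[OF qBK] qqx fixW proj(1)[OF Wc] Q_def by metis
      have o: "cinner (Q x) z = 0"
      proof -
        have "z = q x - Q (q x)" by (simp add: z_def Qq)
        thus ?thesis using proj(2)[OF Wc proj(1)[OF Wc], of x "q x"] Q_def by simp
      qed
      have "cinner x z = cinner x (q z)" by (simp add: qz)
      also have "\<dots> = cinner (q x) z" by (simp add: qsa)
      also have "\<dots> = cinner (Q x + z) z" by (simp add: z_def)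
      also have "\<dots> = cinner z z" by (simp add: cinner_add_left o)
      finally have "cinner x z = cinner z z" .
      thus "Im (cinner x (q x - Q x)) = 0 \<and> 0 \<le> Re (cinner x (q x - Q x))" by (simp add: z_def[symmetric])
    qed
  qed
  have uniq: "q = Q" if q: "is_central_carrier B p q" for q
  proof -
    have qBK: "q \<in> BK" using q unfolding is_central_carrier_def is_projection_def by auto
    have l1: "op_le q Q" using q Qcc unfolding is_central_carrier_def by blast
    have l2: "op_le Q q" using q Qcc unfolding is_central_carrier_def by blast
    have z: "cinner x ((\<lambda>x. Q x - q x) x) = 0" for x
    proof -
      have a: "Im (cinner x (Q x - q x)) = 0" "0 \<le> Re (cinner x (Q x - q x))"
        using l1 unfolding op_le_def pos_op_def by auto
      have "0 \<le> Re (cinner x (q x - Q x))" using l2 unfolding op_le_def pos_op_def by auto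
      hence "Re (cinner x (Q x - q x)) \<le> 0" by (simp add: cinner_diff_right)
      thus ?thesis using a by (simp add: complex_eq_iff)
    qed
    have "Q x - q x = 0" for x using polarization[OF BK_sub[OF QBK qBK] z] by simp
    thus ?thesis by (simp add: fun_eq_iff)
  qed
  have "central_carrier B p = Q" unfolding central_carrier_def using Qcc uniq by (rule the_equality)
  hence Qid: "Q = id" using cc by simp
  have WU: "x \<in> W" for x using proj(1)[OF Wc, of x] Qid Q_def by (metis id_apply)
  have Cscal: "\<exists>lam. \<forall>x. c x = lam *\<^sub>C x" if c: "c \<in> C" for c
  proof -
    obtain lam where l: "\<forall>h\<in>H. c h = lam *\<^sub>C h" using scal[OF c] by blast
    have cBK: "c \<in> BK" using c CBK by auto
    have "V \<subseteq> {x. (\<lambda>x. c x - lam *\<^sub>C x) x = 0}"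
    proof
      fix v assume "v \<in> V"
      then obtain b h where bh: "v = b h" "b \<in> B" "h \<in> H" unfolding V_def by auto
      have bBK: "b \<in> BK" using bh BBK by auto
      have "c v = lam *\<^sub>C v" using Ccomm'[OF bh(2) c] l bh BK_scale[OF bBK] by metis
      thus "v \<in> {x. (\<lambda>x. c x - lam *\<^sub>C x) x = 0}" by simp
    qed
    hence "W \<subseteq> {x. (\<lambda>x. c x - lam *\<^sub>C x) x = 0}"
      using Wmin[OF closed_subspace_kernel[OF BK_sub[OF cBK BK_scaleid]]] by blast
    thus ?thesis using WU by auto
  qed
  have "BK \<subseteq> commutant C"
  proof
    fix f :: "'k \<Rightarrow> 'k" assume f: "f \<in> BK"
    have "c \<circ> f = f \<circ> c" if c: "c \<in> C" for c
    proof -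
      obtain lam where l: "\<forall>x. c x = lam *\<^sub>C x" using Cscal[OF c] by blast
      show ?thesis by (simp add: fun_eq_iff l BK_scale[OF f])
    qed
    thus "f \<in> commutant C" unfolding commutant_def using f by auto
  qed
  thus ?thesis using BC BBK by auto
qed


end
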